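(* Let $(X,\mathcal{T})$ be a finite topological space with furtherness function $\Psi$. The collection $\mathcal{B}^+=\{B^+(x,n)\mid x\in X,\ n\in\mathbb{N}\}$ of forward open balls $B^+(x,n)=\{y\in X\mid \Psi(x,y)<n\}$ is a basis for a topology on $X$, and this topology equals $\mathcal{T}$.
   Context: Here $\mathbb{N}=\{1,2,3,\dots\}$. For a finite topological space $X$ and $x\in X$, $U_x$ denotes the minimal open set containing $x$. A nested sequence of open sets around $x$ is a finite sequence $U_0\subsetneq U_1\subsetneq\cdots\subsetneq U_m=X$ of open sets with $U_0=U_x$ such that for each $j$ there is no open set $V$ with $U_j\subsetneq V\subsetneq U_{j+1}$. The furtherness function $\Psi:X\times X\to\{0,1,\dots,|X|-1\}$ is defined by: $\Psi(x,y)$ is the smallest integer $k\ge 0$ such that there exists a nested sequence $(U_j)_{j\ge0}$ of open sets around $x$ with $y\in U_k$. *)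

theory Defs
  imports "HOL-Analysis.Analysis"
begin

text \<open>Finite topological spaces are modelled by an abstract topology T with
  finite carrier topspace T (playing the role of X).\<close>

definition minimal_open :: "'a topology \<Rightarrow> 'a \<Rightarrow> 'a set" where
  "minimal_open T x = \<Inter>{U. openin T U \<and> x \<in> U}"

definition nested_seq :: "'a topology \<Rightarrow> 'a \<Rightarrow> (nat \<Rightarrow> 'a set) \<Rightarrow> nat \<Rightarrow> bool" where
  "nested_seq T x U m \<longleftrightarrow>
     U 0 = minimal_open T x \<and>
     (\<forall>j\<le>m. openin T (U j)) \<and>
     (\<forall>j<m. U j \<subset> U (Suc j) \<and>
            \<not> (\<exists>V. openin T V \<and> U j \<subset> V \<and> V \<subset> U (Suc j))) \<and>
     U m = topspace T"

definition furtherness :: "'a topology \<Rightarrow> 'a \<Rightarrow> 'a \<Rightarrow> nat" where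
  "furtherness T x y = (LEAST k. \<exists>U m. nested_seq T x U m \<and> k \<le> m \<and> y \<in> U k)"

definition forward_ball :: "'a topology \<Rightarrow> 'a \<Rightarrow> nat \<Rightarrow> 'a set" where
  "forward_ball T x n = {y \<in> topspace T. furtherness T x y < n}"

definition forward_balls :: "'a topology \<Rightarrow> 'a set set" where
  "forward_balls T = {forward_ball T x n | x n. x \<in> topspace T \<and> n \<ge> 1}"

definition is_basis_on :: "'a set \<Rightarrow> 'a set set \<Rightarrow> bool" where
  "is_basis_on X \<B> \<longleftrightarrow>
     (\<forall>B\<in>\<B>. B \<subseteq> X) \<and>
     (\<forall>x\<in>X. \<exists>B\<in>\<B>. x \<in> B) \<and>
     (\<forall>B1\<in>\<B>. \<forall>B2\<in>\<B>. \<forall>x\<in>B1 \<inter> B2. \<exists>B3\<in>\<B>. x \<in> B3 \<and> B3 \<subseteq> B1 \<inter> B2)"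

definition open_from_basis :: "'a set \<Rightarrow> 'a set set \<Rightarrow> 'a set \<Rightarrow> bool" where
  "open_from_basis X \<B> U \<longleftrightarrow> U \<subseteq> X \<and> (\<forall>x\<in>U. \<exists>B\<in>\<B>. x \<in> B \<and> B \<subseteq> U)"

end

theory Submission
  imports Defs
begin

definition chain_up :: "'a topology \<Rightarrow> (nat \<Rightarrow> 'a set) \<Rightarrow> nat \<Rightarrow> bool" where
  "chain_up T U m \<longleftrightarrow>
     (\<forall>j\<le>m. openin T (U j)) \<and>
     (\<forall>j<m. U j \<subset> U (Suc j) \<and>
            \<not> (\<exists>V. openin T V \<and> U j \<subset> V \<and> V \<subset> U (Suc j))) \<and>
     U m = topspace T"

lemma chain_exists:
  assumes fin: "finite (topspace T)"
  shows "openin T A \<Longrightarrow> \<exists>U m. U 0 = A \<and> chain_up T U m"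
proof (induction "card (topspace T - A)" arbitrary: A rule: less_induct)
  case less
  show ?case
  proof (cases "A = topspace T")
    case True
    then show ?thesis unfolding chain_up_def
      by (rule_tac x="\<lambda>_. A" in exI, rule_tac x=0 in exI) (simp add: less.prems)
  next
    case False
    have Asub: "A \<subseteq> topspace T" using less.prems openin_subset by blast
    define S where "S = {V. openin T V \<and> A \<subset> V}"
    have "topspace T \<in> S" using False Asub by (auto simp: S_def)
    moreover have "finite S" unfolding S_def
      by (rule finite_subset[of _ "Pow (topspace T)"]) (use fin openin_subset in auto)
    ultimately obtain V where V: "V \<in> S" "\<forall>b\<in>S. b \<le> V \<longrightarrow> V = b"
      using finite_has_minimal[of S] by blast
    have Vo: "openin T V" and AV: "A \<subset> V" using V(1) by (auto simp: S_def)
    have Vsub: "V \<subseteq> topspace T" using Vo openin_subset by blast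
    have "card (topspace T - V) < card (topspace T - A)"
      by (rule psubset_card_mono) (use fin AV Vsub in auto)
    then obtain W m where W: "W 0 = V" "chain_up T W m" using less.hyps Vo by blast
    define U where "U = (\<lambda>j. if j = 0 then A else W (j - 1))"
    have nob: "\<not> (\<exists>V'. openin T V' \<and> A \<subset> V' \<and> V' \<subset> V)"
      using V(2) by (auto simp: S_def)
    have "chain_up T U (Suc m)"
      unfolding chain_up_def
    proof (intro conjI allI impI)
      fix j assume "j \<le> Suc m" then show "openin T (U j)"
        using W(2) less.prems by (auto simp: U_def chain_up_def)
    next
      fix j assume j: "j < Suc m"
      show "U j \<subset> U (Suc j)"
        using j W AV by (cases j) (auto simp: U_def chain_up_def)
      show "\<not> (\<exists>V. openin T V \<and> U j \<subset> V \<and> V \<subset> U (Suc j))"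
        using j W nob by (cases j) (auto simp: U_def chain_up_def)
    next
      show "U (Suc m) = topspace T" using W(2) by (simp add: U_def chain_up_def)
    qed
    then show ?thesis by (rule_tac x=U in exI, rule_tac x="Suc m" in exI) (simp add: U_def)
  qed
qed

lemma minopen_open:
  assumes fin: "finite (topspace T)" and x: "x \<in> topspace T"
  shows "openin T (minimal_open T x)" "x \<in> minimal_open T x"
proof -
  have "finite {U. openin T U \<and> x \<in> U}"
    by (rule finite_subset[of _ "Pow (topspace T)"]) (use fin openin_subset in auto)
  moreover have "topspace T \<in> {U. openin T U \<and> x \<in> U}" using x by auto
  ultimately show "openin T (minimal_open T x)" unfolding minimal_open_def
    by (intro openin_Inter) auto
  show "x \<in> minimal_open T x" unfolding minimal_open_def by auto
qed

lemma nested_exists: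
  assumes fin: "finite (topspace T)" and x: "x \<in> topspace T"
  shows "\<exists>U m. nested_seq T x U m"
proof -
  obtain U m where "U 0 = minimal_open T x" "chain_up T U m"
    using chain_exists[OF fin minopen_open(1)[OF fin x]] by blast
  then have "nested_seq T x U m" unfolding nested_seq_def chain_up_def by simp
  then show ?thesis by blast
qed

lemma further_witness:
  assumes fin: "finite (topspace T)" and x: "x \<in> topspace T" and y: "y \<in> topspace T"
  shows "\<exists>U m. nested_seq T x U m \<and> furtherness T x y \<le> m \<and> y \<in> U (furtherness T x y)"
proof -
  obtain U m where "nested_seq T x U m" using nested_exists[OF fin x] by blast
  define P where "P = (\<lambda>k. \<exists>U m. nested_seq T x U m \<and> k \<le> m \<and> y \<in> U k)"
  have "y \<in> U m" using y \<open>nested_seq T x U m\<close> by (simp add: nested_seq_def)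
  then have "P m" unfolding P_def
    using \<open>nested_seq T x U m\<close> by blast
  then have "P (Least P)" by (rule LeastI)
  moreover have "furtherness T x y = Least P" unfolding furtherness_def P_def by simp
  ultimately show ?thesis unfolding P_def by simp
qed

lemma further_le:
  assumes "nested_seq T x U m" "k \<le> m" "z \<in> U k"
  shows "furtherness T x z \<le> k"
  unfolding furtherness_def by (rule Least_le) (use assms in blast)

lemma ball_open:
  assumes fin: "finite (topspace T)" and x: "x \<in> topspace T"
  shows "openin T (forward_ball T x n)"
  unfolding openin_subopen[of T "forward_ball T x n"]
proof (intro ballI)
  fix y assume y: "y \<in> forward_ball T x n"
  then have yt: "y \<in> topspace T" and lt: "furtherness T x y < n"
    by (auto simp: forward_ball_def)
  obtain U m where U: "nested_seq T x U m" "furtherness T x y \<le> m"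
      "y \<in> U (furtherness T x y)"
    using further_witness[OF fin x yt] by blast
  let ?k = "furtherness T x y"
  have Uo: "openin T (U ?k)" using U(1,2) unfolding nested_seq_def by blast
  have "U ?k \<subseteq> forward_ball T x n"
  proof
    fix z assume z: "z \<in> U ?k"
    have "furtherness T x z \<le> ?k" by (rule further_le[OF U(1) U(2) z])
    then show "z \<in> forward_ball T x n"
    proof -
      have "z \<in> topspace T" using openin_subset[OF Uo] z by blast
      moreover have "furtherness T x z < n" using lt \<open>furtherness T x z \<le> ?k\<close> by linarith
      ultimately show ?thesis unfolding forward_ball_def by blast
    qed
  qed
  then show "\<exists>T'. openin T T' \<and> y \<in> T' \<and> T' \<subseteq> forward_ball T x n"
    using Uo U(3) by (intro exI[of _ "U ?k"]) simp
qed

lemma ball_one: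
  assumes fin: "finite (topspace T)" and x: "x \<in> topspace T"
  shows "forward_ball T x 1 = minimal_open T x"
proof
  show "forward_ball T x 1 \<subseteq> minimal_open T x"
  proof
    fix y assume y: "y \<in> forward_ball T x 1"
    then have yt: "y \<in> topspace T" and "furtherness T x y = 0"
      by (auto simp: forward_ball_def)
    moreover obtain U m where "nested_seq T x U m" "y \<in> U (furtherness T x y)"
      using further_witness[OF fin x yt] by blast
    ultimately show "y \<in> minimal_open T x"
      by (simp add: nested_seq_def)
  qed
next
  show "minimal_open T x \<subseteq> forward_ball T x 1"
  proof
    fix y assume y: "y \<in> minimal_open T x"
    have yt: "y \<in> topspace T"
      using y minopen_open[OF fin x] openin_subset by blast
    obtain U m where U: "nested_seq T x U m" using nested_exists[OF fin x] by blast
    have "y \<in> U 0" using U y by (simp add: nested_seq_def)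
    then have "furtherness T x y \<le> 0" using further_le[OF U] by blast
    then show "y \<in> forward_ball T x 1" using yt by (simp add: forward_ball_def)
  qed
qed

lemma minopen_sub:
  assumes "openin T U" "x \<in> U" shows "minimal_open T x \<subseteq> U"
  using assms unfolding minimal_open_def by blast

theorem mainTheorem11:
  fixes T :: "'a topology"
  assumes "finite (topspace T)"
  shows "is_basis_on (topspace T) (forward_balls T) \<and>
         (\<forall>U. openin T U \<longleftrightarrow> open_from_basis (topspace T) (forward_balls T) U)"
proof -
  note fin = assms
  have ballsopen: "\<And>B. B \<in> forward_balls T \<Longrightarrow> openin T B"
    using ball_open[OF fin] by (auto simp: forward_balls_def)
  have oneball: "\<And>x. x \<in> topspace T \<Longrightarrow> minimal_open T x \<in> forward_balls T"
  proof -
    fix x assume x: "x \<in> topspace T"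
    have "forward_ball T x 1 \<in> forward_balls T" using x unfolding forward_balls_def by blast
    then show "minimal_open T x \<in> forward_balls T" using ball_one[OF fin x] by simp
  qed
  have key: "\<And>x U. openin T U \<Longrightarrow> x \<in> U \<Longrightarrow> \<exists>B\<in>forward_balls T. x \<in> B \<and> B \<subseteq> U"
  proof -
    fix x U assume U: "openin T U" "x \<in> U"
    then have xt: "x \<in> topspace T" using openin_subset by blast
    show "\<exists>B\<in>forward_balls T. x \<in> B \<and> B \<subseteq> U"
      using oneball[OF xt] minopen_open(2)[OF fin xt] minopen_sub[OF U] by blast
  qed
  have basis: "is_basis_on (topspace T) (forward_balls T)"
    unfolding is_basis_on_def
  proof (intro conjI ballI)
    fix B assume "B \<in> forward_balls T" then show "B \<subseteq> topspace T"
      using ballsopen openin_subset by blast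
  next
    fix x assume "x \<in> topspace T" then show "\<exists>B\<in>forward_balls T. x \<in> B"
      using key[of "topspace T" x] by blast
  next
    fix B1 B2 x assume "B1 \<in> forward_balls T" "B2 \<in> forward_balls T" "x \<in> B1 \<inter> B2"
    then show "\<exists>B3\<in>forward_balls T. x \<in> B3 \<and> B3 \<subseteq> B1 \<inter> B2"
      using key[of "B1 \<inter> B2" x] ballsopen by blast
  qed
  have "\<forall>U. openin T U \<longleftrightarrow> open_from_basis (topspace T) (forward_balls T) U"
  proof (intro allI iffI)
    fix U assume "openin T U" then show "open_from_basis (topspace T) (forward_balls T) U"
      unfolding open_from_basis_def using key openin_subset by blast
  next
    fix U assume "open_from_basis (topspace T) (forward_balls T) U"
    then show "openin T U" unfolding open_from_basis_def
      by (subst openin_subopen) (use ballsopen in blast)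
  qed
  with basis show ?thesis by blast
qed

end
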